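(* Let $i$ be a positive integer. The number of points $P\in\mathcal X_3(\overline{\mathbb F}_{q^2})\setminus\mathcal O$ such that $\alpha(P)$ has $\mathcal P$-order $i$ equals $(q+1)^2\varphi(i+1)$ if $\gcd(i+1,p)=1$, and $0$ otherwise. Moreover, a point $P\in\mathcal X_3(\overline{\mathbb F}_{q^2})\setminus\mathcal O$ is $\mathbb F_{q^2}$-rational if and only if $\alpha(P)^2-\alpha(P)+1=0$ or the $\mathcal P$-order $i$ of $\alpha(P)$ satisfies that $i+1$ divides $m$.
   Context: $\varphi$ is Euler's totient function. Let $q$ be a prime power with $q\equiv2\pmod3$, $p$ its characteristic, $m=(q+1)/3$, and let $\mathcal X_3$ be the nonsingular projective model (defined over $\mathbb F_{q^2}$) of the plane curve $y^{q+1}+x^{2m}+x^m=0$. Let $\mathcal O_0$ be the $m$ points centered at the singular point $(0,0)$ and $\mathcal O_\infty$ the $m$ points over the point at infinity; other points have affine coordinates $(a,b)$, $a\ne0$, and are denoted $P_{(a,b)}$. Let $\mathcal O_m=\{P_{(a,0)}:a^m+1=0\}$, $\mathcal O=\mathcal O_0\cup\mathcal O_\infty\cup\mathcal O_m$, and for $P=P_{(a,b)}\notin\mathcal O$, $\alpha(P)=a^m/(1+a^m)$. Fix a primitive cube root of unity $\zeta_3\in\mathbb F_{q^2}$, let $\mathcal P_i(s)=\frac{(s+\zeta_3)^{3i}-(s+\zeta_3^2)^{3i}}{3(\zeta_3-\zeta_3^2)s(s-1)}$, and for $\alpha\in\overline{\mathbb F}_{q^2}\setminus\{0,1,-\zeta_3,-\zeta_3^2\}$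 let the $\mathcal P$-order of $\alpha$ be the smallest positive integer $i$ with $\mathcal P_{i+1}(\alpha)=0$. *)

theory Defs
  imports "HOL-Computational_Algebra.Polynomial" "HOL-Number_Theory.Number_Theory"
begin

text \<open>The polynomial (rational function) P_i(s), evaluated at s (only used for s not 0 or 1).\<close>
definition Ppoly :: "'a::field \<Rightarrow> nat \<Rightarrow> 'a \<Rightarrow> 'a" where
  "Ppoly z i s = ((s + z) ^ (3 * i) - (s + z ^ 2) ^ (3 * i)) /
                 (3 * (z - z ^ 2) * s * (s - 1))"

definition has_P_order :: "'a::field \<Rightarrow> 'a \<Rightarrow> nat \<Rightarrow> bool" where
  "has_P_order z \<alpha> i \<longleftrightarrow>
     \<alpha> \<notin> {0, 1, - z, - (z ^ 2)} \<and> 0 < i \<and> Ppoly z (i + 1) \<alpha> = 0 \<and>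
     (\<forall>j. 0 < j \<and> j < i \<longrightarrow> Ppoly z (j + 1) \<alpha> \<noteq> 0)"

text \<open>Affine points (a,b), a nonzero, of y^(q+1) + x^(2m) + x^m = 0 outside O_m;
  these are in bijection with the points of X_3 outside O.\<close>
definition curve_pt_notO :: "nat \<Rightarrow> nat \<Rightarrow> 'a::field \<Rightarrow> 'a \<Rightarrow> bool" where
  "curve_pt_notO q m a b \<longleftrightarrow>
     b ^ (q + 1) + a ^ (2 * m) + a ^ m = 0 \<and> a \<noteq> 0 \<and> a ^ m + 1 \<noteq> 0"

definition alpha_pt :: "nat \<Rightarrow> 'a::field \<Rightarrow> 'a" where
  "alpha_pt m a = a ^ m / (1 + a ^ m)"

end

theory Submission
  imports Defs
begin


lemma card_nth_roots:
  fixes c :: "'a::alg_closed_field"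
  assumes c: "c \<noteq> 0" and N: "N > 0" and NN: "of_nat N \<noteq> (0::'a)"
  shows "card {x. x ^ N = c} = N"
proof -
  define P where "P = Polynomial.monom (1::'a) N - [:c:]"
  have degP: "degree P = N" unfolding P_def using N
    by (metis degree_add_eq_left degree_minus degree_monom_eq degree_pCons_0 diff_conv_add_uminus one_neq_zero)
  have lcP: "lead_coeff P = 1" unfolding P_def using N degP
    by (cases N) (simp_all add: P_def coeff_monom)
  have P0: "P \<noteq> 0" using degP N by auto
  obtain A where A: "size A = N" "P = Polynomial.smult (lead_coeff P) (\<Prod>x\<in>#A. [:-x, 1:])"
    using alg_closed_imp_factorization[OF P0] degP by auto
  have PA: "P = (\<Prod>x\<in>#A. [:-x, 1:])" using A(2) unfolding lcP by simp
  have roots: "{x. x ^ N = c} = set_mset A"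
  proof -
    have "x ^ N = c \<longleftrightarrow> poly P x = 0" for x by (simp add: P_def poly_monom)
    also have "poly P x = 0 \<longleftrightarrow> x \<in># A" for x
      by (subst PA) (force simp add: poly_prod_mset prod_mset_zero_iff)
    finally show ?thesis by auto
  qed
  have cnt: "count A x \<le> 1" for x
  proof (rule ccontr)
    assume "\<not> count A x \<le> 1"
    hence "count A x \<ge> 2" by simp
    hence "x \<in># A" using not_in_iff[of x A] by auto
    then obtain A1 where A1: "A = add_mset x A1" by (metis multi_member_split)
    hence "x \<in># A1" using \<open>count A x \<ge> 2\<close> proof -
      have "count A1 x \<ge> 1" using A1 \<open>count A x \<ge> 2\<close> by simp
      thus ?thesis using not_in_iff[of x A1] by auto
    qed
    then obtain B where "A1 = add_mset x B" by (metis multi_member_split)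
    hence B: "A = {#x, x#} + B" using A1 by simp
    define r where "r = [:-x, 1::'a:]"
    define R where "R = (\<Prod>y\<in>#B. [:-y, 1::'a:])"
    have PR: "P = r * (r * R)" unfolding PA B r_def R_def by (simp add: mult.assoc)
    have rx: "poly r x = 0" by (simp add: r_def)
    have "pderiv P = r * pderiv (r * R) + pderiv r * (r * R)" unfolding PR by (simp add: pderiv_mult)
    hence "poly (pderiv P) x = 0" using rx by simp
    moreover have "x \<in> {x. x ^ N = c}" using roots B by auto
    hence "x \<noteq> 0" using c N by auto
    hence "poly (pderiv P) x \<noteq> 0" using NN by (simp add: P_def pderiv_diff pderiv_monom poly_monom)
    ultimately show False by simp
  qed
  have "A = mset_set (set_mset A)"
  proof (rule multiset_eqI)
    fix y show "count A y = count (mset_set (set_mset A)) y"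
      using cnt[of y] by (cases "y \<in># A") (auto simp: count_mset_set not_in_iff, metis le_SucE not_in_iff le_zero_eq)
  qed
  hence "size A = card (set_mset A)" by (metis size_mset_set)
  thus ?thesis using roots A by simp
qed


definition ordp :: "'a::field \<Rightarrow> nat \<Rightarrow> bool" where
  "ordp s n \<longleftrightarrow> 0 < n \<and> s ^ n = 1 \<and> (\<forall>j. 0 < j \<and> j < n \<longrightarrow> s ^ j \<noteq> 1)"

lemma ordp_dvd:
  assumes "ordp s d" "s ^ n = 1"
  shows "d dvd n"
proof -
  have d: "0 < d" "s ^ d = 1" "\<And>j. 0 < j \<Longrightarrow> j < d \<Longrightarrow> s ^ j \<noteq> 1"
    using assms(1) unfolding ordp_def by auto
  have "s ^ n = s ^ (d * (n div d) + n mod d)" by simp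
  also have "\<dots> = (s ^ d) ^ (n div d) * s ^ (n mod d)" by (simp only: power_add power_mult)
  finally have "s ^ (n mod d) = 1" using d assms(2) by simp
  moreover have "n mod d < d" using d(1) by simp
  ultimately have "n mod d = 0" using d(3)[of "n mod d"] by (cases "n mod d = 0") auto
  thus ?thesis by (simp add: dvd_eq_mod_eq_0)
qed

lemma ordp_unique: "ordp s d \<Longrightarrow> ordp s e \<Longrightarrow> d = e"
  using ordp_dvd[of s d e] ordp_dvd[of s e d] unfolding ordp_def by (auto intro: dvd_antisym)

lemma ordp_exists:
  assumes "s ^ n = 1" "n > 0"
  shows "\<exists>d. ordp s d \<and> d dvd n"
proof -
  define d where "d = (LEAST d. 0 < d \<and> s ^ d = 1)"
  have "0 < d \<and> s ^ d = 1" unfolding d_def by (rule LeastI[of _ n]) (use assms in auto)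
  moreover have "\<forall>j. 0 < j \<and> j < d \<longrightarrow> s ^ j \<noteq> 1"
    unfolding d_def using not_less_Least by blast
  ultimately have "ordp s d" unfolding ordp_def by auto
  thus ?thesis using ordp_dvd assms by blast
qed

lemma ordp_pow: "ordp s d \<Longrightarrow> d dvd n \<Longrightarrow> s ^ n = 1"
  unfolding ordp_def by (auto elim!: dvdE simp: power_mult)

lemma card_ordp:
  fixes n :: nat
  assumes "0 < n" "of_nat n \<noteq> (0::'a::alg_closed_field)"
  shows "card {s::'a. ordp s n} = totient n"
  using assms
proof (induction n rule: less_induct)
  case (less n)
  define D where "D = {d. d dvd n}"
  have finD: "finite D" unfolding D_def using less.prems(1) by simp
  have nD: "n \<in> D" unfolding D_def by simp
  have cU: "card {s::'a. s ^ n = 1} = n" by (rule card_nth_roots) (use less.prems in auto)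
  hence finU: "finite {s::'a. s ^ n = 1}" using less.prems(1) card_ge_0_finite by force
  have U: "{s::'a. s ^ n = 1} = (\<Union>d\<in>D. {s. ordp s d})"
    unfolding D_def using ordp_exists ordp_pow less.prems(1) by blast
  have fin: "finite {s::'a. ordp s d}" if "d \<in> D" for d
    by (rule finite_subset[OF _ finU]) (use that U in blast)
  have "n = card (\<Union>d\<in>D. {s::'a. ordp s d})" using cU U by simp
  also have "\<dots> = (\<Sum>d\<in>D. card {s::'a. ordp s d})"
    by (rule card_UN_disjoint[OF finD]) (use fin ordp_unique in auto)
  also have "\<dots> = card {s::'a. ordp s n} + (\<Sum>d\<in>D - {n}. card {s::'a. ordp s d})"
    using finD nD by (simp add: sum.remove)
  also have "(\<Sum>d\<in>D - {n}. card {s::'a. ordp s d}) = (\<Sum>d\<in>D - {n}. totient d)"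
  proof (rule sum.cong[OF refl])
    fix d assume d: "d \<in> D - {n}"
    hence dn: "d dvd n" "d \<noteq> n" unfolding D_def by auto
    hence "d < n" "0 < d" using less.prems(1) dvd_imp_le by (auto intro: dvd_pos_nat)
    moreover have "of_nat d \<noteq> (0::'a)"
      using dn(1) less.prems(2) by (metis dvd_def mult_zero_left of_nat_mult)
    ultimately show "card {s::'a. ordp s d} = totient d" using less.IH by blast
  qed
  finally have 1: "n = card {s::'a. ordp s n} + (\<Sum>d\<in>D - {n}. totient d)" .
  have "n = (\<Sum>d\<in>D. totient d)" unfolding D_def by (rule totient_divisor_sum[symmetric])
  also have "\<dots> = totient n + (\<Sum>d\<in>D - {n}. totient d)" using finD nD by (simp add: sum.remove)
  finally show ?case using 1 by linarith
qed

lemma ordp_not_dvd: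
  assumes "prime p" "\<forall>x::'a::field. \<exists>n>0. x ^ (p ^ n) = x" "ordp (s::'a) n"
  shows "\<not> p dvd n"
proof
  assume pn: "p dvd n"
  obtain N where N: "N > 0" "s ^ (p ^ N) = s" using assms(2) by blast
  have s0: "s \<noteq> 0" using assms(3) unfolding ordp_def by (metis power_0_left zero_neq_one less_not_refl)
  have pN: "p ^ N \<ge> 1" using assms(1) by (simp add: prime_gt_0_nat Suc_leI)
  obtain e where e: "p ^ N = Suc e" using pN by (cases "p ^ N") auto
  have "s * s ^ (p ^ N - 1) = s * 1" using N e by simp
  hence "s ^ (p ^ N - 1) = 1" using s0 by simp
  hence "n dvd p ^ N - 1" using ordp_dvd assms(3) by blast
  hence "p dvd p ^ N - 1" using pn by (rule dvd_trans[rotated])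
  moreover have "p dvd p ^ N" using N by simp
  ultimately have "p dvd p ^ N - (p ^ N - 1)" by (rule dvd_diff_nat[rotated])
  hence "p dvd 1" using pN by simp
  thus False using assms(1) by simp
qed

lemma card_fibers:
  assumes "finite B" "\<And>y. y \<in> B \<Longrightarrow> card {x. P x \<and> f x = y} = k" "k > 0"
  shows "card {x. P x \<and> f x \<in> B} = k * card B"
proof -
  have "{x. P x \<and> f x \<in> B} = (\<Union>y\<in>B. {x. P x \<and> f x = y})" by auto
  moreover have "card (\<Union>y\<in>B. {x. P x \<and> f x = y}) = (\<Sum>y\<in>B. card {x. P x \<and> f x = y})"
    by (rule card_UN_disjoint[OF assms(1)]) (use assms(2,3) card_ge_0_finite in auto)
  ultimately show ?thesis using assms(2) by simp
qed


definition mob :: "'a::field \<Rightarrow> 'a \<Rightarrow> 'a" where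
  "mob z x = (x + z) / (x + z ^ 2)"

lemma zfacts:
  fixes z :: "'a::field"
  assumes "z ^ 3 = 1" "z \<noteq> 1"
  shows "z ^ 2 + z + 1 = 0" "z \<noteq> 0" "z ^ 2 \<noteq> z" "z ^ 2 \<noteq> 1"
proof -
  have "(z - 1) * (z ^ 2 + z + 1) = z ^ 3 - 1" by (simp add: algebra_simps power2_eq_square power3_eq_cube)
  hence "(z - 1) * (z ^ 2 + z + 1) = 0" using assms(1) by simp
  thus z2: "z ^ 2 + z + 1 = 0" using assms(2) by simp
  show "z \<noteq> 0" using assms(1) by auto
  show "z ^ 2 \<noteq> z"
  proof
    assume "z ^ 2 = z"
    moreover have "z * (z - 1) = z ^ 2 - z" by (simp add: algebra_simps power2_eq_square power3_eq_cube)
    ultimately have "z * (z - 1) = 0" by simp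
    thus False using assms \<open>z \<noteq> 0\<close> by simp
  qed
  show "z ^ 2 \<noteq> 1"
  proof
    assume "z ^ 2 = 1"
    moreover have "z ^ 3 = z * z ^ 2" by (simp add: algebra_simps power2_eq_square power3_eq_cube)
    ultimately have "z = 1" using assms(1) by simp
    thus False using assms by simp
  qed
qed

lemma cube_roots:
  fixes z x :: "'a::field"
  assumes "z ^ 3 = 1" "z \<noteq> 1" "x ^ 3 = 1"
  shows "x = 1 \<or> x = z \<or> x = z ^ 2"
proof -
  have z2: "z ^ 2 + z + 1 = 0" using zfacts assms by blast
  have "(x - z) * (x - z ^ 2) = x ^ 2 - (z ^ 2 + z) * x + z ^ 3" by (simp add: algebra_simps power2_eq_square power3_eq_cube)
  also have "\<dots> = x ^ 2 + x + 1" using z2 assms(1) by (simp add: eq_neg_iff_add_eq_0[symmetric] add.assoc)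
  finally have "(x - 1) * ((x - z) * (x - z ^ 2)) = (x - 1) * (x ^ 2 + x + 1)" by simp
  also have "\<dots> = x ^ 3 - 1" by (simp add: algebra_simps power2_eq_square power3_eq_cube)
  finally have "(x - 1) * (x - z) * (x - z ^ 2) = 0" using assms(3) by (simp add: mult.assoc)
  thus ?thesis by auto
qed

lemma Ppoly_zero:
  fixes z x :: "'a::field"
  assumes "z ^ 3 = 1" "z \<noteq> 1" "(3::'a) \<noteq> 0" "x \<notin> {0, 1, -z, -(z^2)}"
  shows "Ppoly z N x = 0 \<longleftrightarrow> (mob z x) ^ (3 * N) = 1"
proof -
  have zf: "z ^ 2 \<noteq> z" "z \<noteq> 0" using zfacts assms(1,2) by blast+
  have den: "3 * (z - z ^ 2) * x * (x - 1) \<noteq> 0" using assms zf by auto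
  have d2: "x + z ^ 2 \<noteq> 0" using assms(4) by (auto simp: add_eq_0_iff)
  have "Ppoly z N x = 0 \<longleftrightarrow> (x + z) ^ (3 * N) = (x + z ^ 2) ^ (3 * N)"
    unfolding Ppoly_def using den by simp
  also have "\<dots> \<longleftrightarrow> (mob z x) ^ (3 * N) = 1"
    unfolding mob_def power_divide using d2 by simp
  finally show ?thesis .
qed

lemma mob_props:
  fixes z x :: "'a::field"
  assumes "z ^ 3 = 1" "z \<noteq> 1" "x \<notin> {0, 1, -z, -(z^2)}"
  shows "mob z x \<noteq> 0" "(mob z x) ^ 3 \<noteq> 1"
proof -
  have zf: "z ^ 2 \<noteq> z" "z \<noteq> 0" "z ^ 2 + z + 1 = 0" "z ^ 2 \<noteq> 1" using zfacts assms(1,2) by blast+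
  have d1: "x + z \<noteq> 0" and d2: "x + z ^ 2 \<noteq> 0" using assms(3) by (auto simp: add_eq_0_iff)
  show "mob z x \<noteq> 0" unfolding mob_def using d1 d2 by simp
  show "(mob z x) ^ 3 \<noteq> 1"
  proof
    assume "(mob z x) ^ 3 = 1"
    hence "mob z x = 1 \<or> mob z x = z \<or> mob z x = z ^ 2" using cube_roots assms(1,2) by blast
    hence "x + z = x + z ^ 2 \<or> x + z = z * (x + z ^ 2) \<or> x + z = z ^ 2 * (x + z ^ 2)"
      unfolding mob_def using d2 by (auto simp: field_simps)
    moreover have "x + z = z * (x + z ^ 2) \<Longrightarrow> (x - 1) * (z - 1) = 0"
    proof -
      assume h: "x + z = z * (x + z ^ 2)"
      have "z * (x + z ^ 2) = z * x + z ^ 3" by (simp add: algebra_simps power2_eq_square power3_eq_cube)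
      hence h2: "x + z = z * x + 1" using h assms(1) by simp
      have "(x - 1) * (z - 1) = (z * x + 1) - (x + z)" by (simp add: algebra_simps power2_eq_square power3_eq_cube)
      thus ?thesis using h2 by simp
    qed
    moreover have "x + z = z ^ 2 * (x + z ^ 2) \<Longrightarrow> x * (z ^ 2 - 1) = 0"
    proof -
      assume h: "x + z = z ^ 2 * (x + z ^ 2)"
      have "z ^ 2 * (x + z ^ 2) = z ^ 2 * x + z ^ 3 * z" by (simp add: algebra_simps power2_eq_square power3_eq_cube)
      hence h2: "x + z = z ^ 2 * x + z" using h assms(1) by simp
      have "x * (z ^ 2 - 1) = (z ^ 2 * x + z) - (x + z)" by (simp add: algebra_simps power2_eq_square power3_eq_cube)
      thus ?thesis using h2 by simp
    qed
    ultimately show False using zf assms by auto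
  qed
qed

lemma mob_inv:
  fixes z t :: "'a::field"
  assumes "z ^ 3 = 1" "z \<noteq> 1" "t \<noteq> 0" "t ^ 3 \<noteq> 1"
  defines "x \<equiv> (z - t * z ^ 2) / (t - 1)"
  shows "x \<notin> {0, 1, -z, -(z^2)}" "mob z x = t"
proof -
  have zf: "z ^ 2 \<noteq> z" "z \<noteq> 0" "z ^ 2 + z + 1 = 0" "z ^ 2 \<noteq> 1" using zfacts assms(1,2) by blast+
  have t1: "t - 1 \<noteq> 0" using assms(4) by auto
  have e1: "x + z = t * (z - z ^ 2) / (t - 1)" unfolding x_def using t1 by (simp add: field_simps)
  have e2: "x + z ^ 2 = (z - z ^ 2) / (t - 1)" unfolding x_def using t1 by (simp add: field_simps)
  have nz: "z - z ^ 2 \<noteq> 0" using zf by simp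
  have n1: "x \<noteq> -z" using e1 assms(3) nz t1 by (auto simp: add_eq_0_iff)
  have n2: "x \<noteq> -(z^2)" using e2 nz t1 by (auto simp: add_eq_0_iff)
  show mt: "mob z x = t" unfolding mob_def e1 e2 using nz t1 by simp
  have "x \<noteq> 0"
  proof
    assume "x = 0"
    hence "t = z / z ^ 2" using mt unfolding mob_def by simp
    hence "t * z ^ 2 = z" using zf by simp
    hence "z * (t * z - 1) = 0" by (simp add: algebra_simps power2_eq_square power3_eq_cube)
    hence "t * z = 1" using zf(2) by simp
    hence "(t * z) ^ 3 = 1" by simp
    hence "t ^ 3 = 1" using assms(1) by (simp add: power_mult_distrib)
    thus False using assms by simp
  qed
  moreover have "x \<noteq> 1"
  proof
    assume "x = 1"
    hence "t = (1 + z) / (1 + z ^ 2)" using mt unfolding mob_def by simp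
    moreover have "1 + z ^ 2 \<noteq> 0" using n2 \<open>x = 1\<close> by (auto simp: add_eq_0_iff)
    ultimately have "t * (1 + z ^ 2) = 1 + z" by simp
    moreover have "1 + z ^ 2 = - z" "1 + z = - (z ^ 2)" using zf(3) by (simp_all add: eq_neg_iff_add_eq_0 add_ac)
    ultimately have "t * z = z * z" by (simp add: power2_eq_square)
    hence "t = z" using zf(2) by simp
    hence "t ^ 3 = 1" using assms(1) by simp
    thus False using assms by simp
  qed
  ultimately show "x \<notin> {0, 1, -z, -(z^2)}" using n1 n2 by auto
qed

lemma mob_inj:
  fixes z x y :: "'a::field"
  assumes "z ^ 3 = 1" "z \<noteq> 1" "x \<noteq> -(z^2)" "y \<noteq> -(z^2)" "mob z x = mob z y"
  shows "x = y"
proof -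
  have zf: "z ^ 2 \<noteq> z" using zfacts assms(1,2) by blast+
  have d: "x + z ^ 2 \<noteq> 0" "y + z ^ 2 \<noteq> 0" using assms(3,4) by (auto simp: add_eq_0_iff)
  have "(x + z) * (y + z ^ 2) = (y + z) * (x + z ^ 2)" using assms(5) d unfolding mob_def
    by (simp add: field_simps)
  moreover have "(x - y) * (z ^ 2 - z) = (x + z) * (y + z ^ 2) - (y + z) * (x + z ^ 2)" by (simp add: algebra_simps power2_eq_square power3_eq_cube)
  ultimately have "(x - y) * (z ^ 2 - z) = 0" by simp
  thus ?thesis using zf by simp
qed

lemma has_P_iff:
  fixes z x :: "'a::field"
  assumes "z ^ 3 = 1" "z \<noteq> 1" "(3::'a) \<noteq> 0" "i > 0"
  shows "has_P_order z x i \<longleftrightarrow> x \<notin> {0, 1, -z, -(z^2)} \<and> ordp ((mob z x) ^ 3) (i + 1)"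
proof (cases "x \<notin> {0, 1, -z, -(z^2)}")
  case True
  have P: "Ppoly z (j + 1) x = 0 \<longleftrightarrow> ((mob z x) ^ 3) ^ (j + 1) = 1" for j
    using Ppoly_zero[OF assms(1-3) True] by (simp add: power_mult)
  have s1: "(mob z x) ^ 3 \<noteq> 1" using mob_props[OF assms(1,2) True] by simp
  show ?thesis
  proof
    assume h: "has_P_order z x i"
    show "x \<notin> {0, 1, -z, -(z^2)} \<and> ordp ((mob z x) ^ 3) (i + 1)"
      unfolding ordp_def
    proof (intro conjI allI impI)
      show "((mob z x) ^ 3) ^ (i + 1) = 1" using h P unfolding has_P_order_def by blast
    next
      fix j assume j: "0 < j \<and> j < i + 1"
      show "((mob z x) ^ 3) ^ j \<noteq> 1"
      proof (cases "j = 1")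
        case True thus ?thesis using s1 by simp
      next
        case False
        hence "0 < j - 1" "j - 1 < i" using j by auto
        hence "Ppoly z (j - 1 + 1) x \<noteq> 0" using h unfolding has_P_order_def by blast
        thus ?thesis using P[of "j - 1"] False j by simp
      qed
    qed (use True in auto)
  next
    assume h: "x \<notin> {0, 1, -z, -(z^2)} \<and> ordp ((mob z x) ^ 3) (i + 1)"
    show "has_P_order z x i" unfolding has_P_order_def
    proof (intro conjI allI impI)
      show "Ppoly z (i + 1) x = 0" using h P unfolding ordp_def by blast
    next
      fix j assume j: "0 < j \<and> j < i"
      hence "((mob z x) ^ 3) ^ (j + 1) \<noteq> 1" using h unfolding ordp_def by auto
      thus "Ppoly z (j + 1) x \<noteq> 0" using P by blast
    qed (use True assms in auto)
  qed
qed (auto simp: has_P_order_def)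


lemma curve_fiber:
  fixes x :: "'a::alg_closed_field"
  assumes "x \<noteq> 0" "x \<noteq> 1" "m > 0" "of_nat m \<noteq> (0::'a)" "of_nat (q + 1) \<noteq> (0::'a)"
  shows "card {(a, b). curve_pt_notO q m a b \<and> alpha_pt m a = x} = m * (q + 1)"
proof -
  define c1 where "c1 = x / (1 - x)"
  define c2 where "c2 = - (c1 ^ 2 + c1)"
  have x1: "1 - x \<noteq> 0" using assms(2) by simp
  have c10: "c1 \<noteq> 0" using assms(1) x1 by (simp add: c1_def)
  have c11: "c1 + 1 \<noteq> 0" using x1 by (simp add: c1_def field_simps)
  have c20: "c2 \<noteq> 0"
  proof -
    have "c2 = - (c1 * (c1 + 1))" by (simp add: c2_def algebra_simps power2_eq_square)
    thus ?thesis using c10 c11 by simp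
  qed
  have eq: "{(a, b). curve_pt_notO q m a b \<and> alpha_pt m a = x} = {a. a ^ m = c1} \<times> {b. b ^ (q + 1) = c2}"
  proof (rule subset_antisym; rule subsetI)
    fix ab assume "ab \<in> {(a, b). curve_pt_notO q m a b \<and> alpha_pt m a = x}"
    then obtain a b where ab: "ab = (a, b)" "curve_pt_notO q m a b" "alpha_pt m a = x" by auto
    define u where "u = a ^ m"
    have h: "b ^ (q + 1) + u ^ 2 + u = 0" "1 + u \<noteq> 0" "u / (1 + u) = x"
      using ab(2,3) unfolding curve_pt_notO_def alpha_pt_def u_def by (auto simp: power_mult add.commute mult.commute[of 2 m])
    have "u = x * (1 + u)" using h(2,3) by (simp add: field_simps)
    hence "u = c1" using x1 unfolding c1_def by (simp add: field_simps)
    have h1': "b ^ (q + 1) + (u ^ 2 + u) = 0" using h(1) by (simp only: add.assoc)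
    hence "b ^ (q + 1) = - (u ^ 2 + u)" by (simp only: eq_neg_iff_add_eq_0)
    hence "b ^ (q + 1) = c2" using \<open>u = c1\<close> unfolding c2_def by simp
    show "ab \<in> {a. a ^ m = c1} \<times> {b. b ^ (q + 1) = c2}" using ab(1) u_def \<open>u = c1\<close> \<open>b ^ (q + 1) = c2\<close> by simp
  next
    fix ab assume "ab \<in> {a. a ^ m = c1} \<times> {b. b ^ (q + 1) = c2}"
    then obtain a b where ab: "ab = (a, b)" "a ^ m = c1" "b ^ (q + 1) = c2" by auto
    have a0: "a \<noteq> 0" using ab(2) c10 assms(3) by auto
    have "a ^ (2 * m) = c1 ^ 2" using ab(2) by (simp add: power_mult mult.commute[of 2 m])
    hence "curve_pt_notO q m a b" unfolding curve_pt_notO_def using ab a0 c11 by (simp add: c2_def add.commute)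
    moreover have "alpha_pt m a = x" unfolding alpha_pt_def ab(2) c1_def using x1 by (simp add: field_simps)
    ultimately show "ab \<in> {(a, b). curve_pt_notO q m a b \<and> alpha_pt m a = x}" using ab(1) by simp
  qed
  have "card {a::'a. a ^ m = c1} = m" by (rule card_nth_roots) (use c10 assms in auto)
  moreover have "card {b::'a. b ^ (q + 1) = c2} = q + 1" by (rule card_nth_roots) (use c20 assms in auto)
  ultimately show ?thesis unfolding eq card_cartesian_product by simp
qed

lemma frob:
  fixes x y :: "'a::field"
  assumes "prime p" "CHAR('a) = p" "q = p ^ k"
  shows "(x + y) ^ q = x ^ q + y ^ q" "(- x) ^ q = - (x ^ q)" "(x - y) ^ q = x ^ q - y ^ q"
proof -
  have pc: "prime CHAR('a)" using assms by simp
  show add: "(x + y) ^ q = x ^ q + y ^ q" for x y :: 'a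
    using freshmans_dream'[OF pc, of q k] assms by simp
  have q0: "q > 0" using assms prime_gt_0_nat by simp
  show neg: "(- x) ^ q = - (x ^ q)" for x :: 'a
  proof -
    have "0 = (x + - x) ^ q" using q0 by simp
    also have "\<dots> = x ^ q + (- x) ^ q" by (rule add)
    finally show ?thesis by (simp add: eq_neg_iff_add_eq_0 add.commute)
  qed
  show "(x - y) ^ q = x ^ q - y ^ q" using add[of x "- y"] neg[of y] by simp
qed


lemma part2:
  fixes z a b :: "'a::alg_closed_field" and p q k m :: nat
  assumes pp: "prime p" and ch: "CHAR('a) = p" and qd: "q = p ^ k" and q3: "q mod 3 = 2"
    and m3: "3 * m = q + 1" and z3: "z ^ 3 = 1" and z1: "z \<noteq> 1" and three: "(3::'a) \<noteq> 0"
    and cv: "curve_pt_notO q m a b"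
  shows "(a ^ (q ^ 2) = a \<and> b ^ (q ^ 2) = b) \<longleftrightarrow>
         ((alpha_pt m a) ^ 2 - alpha_pt m a + 1 = 0 \<or>
          (\<exists>j. has_P_order z (alpha_pt m a) j \<and> (j + 1) dvd m))"
proof -
  note F = frob[OF pp ch qd]
  have zf: "z ^ 2 \<noteq> z" "z \<noteq> 0" "z ^ 2 + z + 1 = 0" "z ^ 2 \<noteq> 1" using zfacts z3 z1 by blast+
  have q2: "q \<ge> 2" using q3 by (metis mod_less not_less numeral_neq_zero mod_le_divisor zero_less_numeral le_trans less_imp_le_nat)
  have zq: "z ^ q = z ^ 2"
  proof -
    have "q = 3 * (q div 3) + 2" using q3 by (metis div_mult_mod_eq mult.commute)
    hence "z ^ q = (z ^ 3) ^ (q div 3) * z ^ 2" by (metis power_add power_mult)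
    thus ?thesis using z3 by simp
  qed
  have z2q: "(z ^ 2) ^ q = z"
  proof -
    have "(z ^ 2) ^ q = (z ^ q) ^ 2" by (simp add: power_mult[symmetric] mult.commute)
    also have "\<dots> = z ^ 3 * z" unfolding zq by (simp add: power2_eq_square power3_eq_cube)
    finally show ?thesis using z3 by simp
  qed
  define u where "u = a ^ m"
  define x where "x = alpha_pt m a"
  define w where "w = b ^ (q + 1)"
  have a0: "a \<noteq> 0" and u1: "1 + u \<noteq> 0" and cu: "w + u ^ 2 + u = 0"
    using cv unfolding curve_pt_notO_def u_def w_def
    by (auto simp: power_mult add.commute mult.commute[of 2 m])
  have u0: "u \<noteq> 0" using a0 u_def by simp
  have xu: "x = u / (1 + u)" by (simp add: x_def alpha_pt_def u_def)
  have wu: "w = - (u ^ 2 + u)"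
  proof -
    have "w + (u ^ 2 + u) = 0" using cu by (simp only: add.assoc)
    thus ?thesis by (simp only: eq_neg_iff_add_eq_0)
  qed
  have w0: "w \<noteq> 0"
  proof -
    have "u ^ 2 + u = u * (1 + u)" by (simp add: algebra_simps power2_eq_square)
    thus ?thesis using wu u0 u1 by simp
  qed
  have b0: "b \<noteq> 0" using w0 unfolding w_def by auto
  have x0: "x \<noteq> 0" using xu u0 u1 by simp
  have x1: "x \<noteq> 1" using xu u1 by (auto simp: field_simps)
  have u1q: "1 + u ^ q \<noteq> 0" using F(1)[of 1 u] u1 by (metis power_one power_not_zero)
  have xq: "x ^ q = u ^ q / (1 + u ^ q)" unfolding xu power_divide F(1) by simp
  have wq: "w ^ q = - ((u ^ q) ^ 2 + u ^ q)"
    unfolding wu F(2) F(1) by (simp add: power_mult[symmetric] mult.commute)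
  have xux: "x * (1 + u) = u" using xu u1 by simp
  have xpoly: "(x ^ 2 - x + 1) * (1 + u) ^ 2 = u ^ 2 + u + 1"
  proof -
    have "(x ^ 2 - x + 1) * (1 + u) ^ 2 = (x * (1 + u)) ^ 2 - (x * (1 + u)) * (1 + u) + (1 + u) ^ 2"
      by (simp add: algebra_simps power2_eq_square)
    also have "\<dots> = u ^ 2 + u + 1" unfolding xux by (simp add: algebra_simps power2_eq_square)
    finally show ?thesis .
  qed
  have q1: "q = Suc (q - 1)" using q2 by simp
  have powfix: "y ^ (q ^ 2) = y \<longleftrightarrow> y ^ (q ^ 2 - 1) = 1" if "y \<noteq> 0" for y :: 'a
  proof -
    have "q ^ 2 = Suc (q ^ 2 - 1)" using q2 by (simp add: Suc_diff_1)
    hence "y ^ (q ^ 2) = y * y ^ (q ^ 2 - 1)" by (metis power_Suc)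
    thus ?thesis using that by auto
  qed
  have qq: "q ^ 2 - 1 = (q + 1) * (q - 1)" using q1 by (cases q) (auto simp: power2_eq_square)
  have LA: "a ^ (q ^ 2 - 1) = u ^ (3 * (q - 1))"
    unfolding qq m3[symmetric] u_def by (simp add: power_mult[symmetric] mult_ac)
  have LB: "b ^ (q ^ 2 - 1) = w ^ (q - 1)"
    unfolding qq w_def by (simp only: power_mult)
  have L: "(a ^ (q ^ 2) = a \<and> b ^ (q ^ 2) = b) \<longleftrightarrow> (u ^ (3 * (q - 1)) = 1 \<and> w ^ (q - 1) = 1)"
    using powfix[OF a0] powfix[OF b0] LA LB by simp
  have E: "(u ^ (3 * (q - 1)) = 1 \<and> w ^ (q - 1) = 1) \<longleftrightarrow> (x ^ 2 - x + 1 = 0 \<or> x ^ q = x)"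
  proof
    assume h: "u ^ (3 * (q - 1)) = 1 \<and> w ^ (q - 1) = 1"
    define v where "v = u ^ (q - 1)"
    have v3: "v ^ 3 = 1" using h unfolding v_def by (simp add: power_mult[symmetric] mult.commute)
    have uq: "u ^ q = v * u" unfolding v_def by (subst q1) (simp add: mult.commute)
    have "w ^ q = w" using h by (subst q1) simp
    hence "- ((u ^ q) ^ 2 + u ^ q) = - (u ^ 2 + u)" using wq wu by metis
    hence "(u ^ q) ^ 2 + u ^ q = u ^ 2 + u" by (simp only: neg_equal_iff_equal)
    hence "(v * u) ^ 2 + v * u = u ^ 2 + u" unfolding uq .
    show "x ^ 2 - x + 1 = 0 \<or> x ^ q = x"
    proof (cases "v = 1")
      case True
      thus ?thesis using uq xq xu by simp
    next
      case False
      have v2: "v ^ 2 + v + 1 = 0" using zfacts(1)[OF v3 False] .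
      have "u * (v ^ 2 * u + v - u - 1) = ((v * u) ^ 2 + v * u) - (u ^ 2 + u)"
        by (simp add: algebra_simps power2_eq_square)
      hence "v ^ 2 * u + v - u - 1 = 0" using \<open>(v * u) ^ 2 + v * u = u ^ 2 + u\<close> u0 by simp
      moreover have "(v - 1) * (u * (v + 1) + 1) = v ^ 2 * u + v - u - 1"
        by (simp add: algebra_simps power2_eq_square)
      ultimately have "u * (v + 1) + 1 = 0" using False by simp
      moreover have "v + 1 = - (v ^ 2)" using v2 by (simp add: eq_neg_iff_add_eq_0 add_ac)
      ultimately have "u * v ^ 2 = 1" by (simp add: eq_neg_iff_add_eq_0[symmetric])
      hence "u * v ^ 2 * v = v" by simp
      moreover have "u * v ^ 2 * v = u * v ^ 3" by (simp add: power2_eq_square power3_eq_cube)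
      ultimately have "u = v" using v3 by simp
      hence "u ^ 2 + u + 1 = 0" using v2 by simp
      hence "(x ^ 2 - x + 1) * (1 + u) ^ 2 = 0" using xpoly by simp
      thus ?thesis using u1 by simp
    qed
  next
    assume h: "x ^ 2 - x + 1 = 0 \<or> x ^ q = x"
    show "u ^ (3 * (q - 1)) = 1 \<and> w ^ (q - 1) = 1"
    proof (cases "x ^ q = x")
      case True
      hence "u ^ q / (1 + u ^ q) = u / (1 + u)" using xq xu by simp
      hence "u ^ q * (1 + u) = u * (1 + u ^ q)" using u1 u1q by (simp add: field_simps)
      hence uq: "u ^ q = u" by (simp add: algebra_simps)
      hence "u * u ^ (q - 1) = u * 1" by (subst (asm) q1) simp
      hence "u ^ (q - 1) = 1" using u0 by (metis mult_left_cancel)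
      hence A1: "u ^ (3 * (q - 1)) = 1" by (metis power_mult mult.commute power_one)
      have "w ^ q = w" using wq wu uq by simp
      hence "w * w ^ (q - 1) = w * 1" by (subst (asm) q1) simp
      hence "w ^ (q - 1) = 1" using w0 by (metis mult_left_cancel)
      thus ?thesis using A1 by simp
    next
      case False
      hence "x ^ 2 - x + 1 = 0" using h by simp
      hence u2: "u ^ 2 + u + 1 = 0" using xpoly by simp
      have "(u - 1) * (u ^ 2 + u + 1) = u ^ 3 - 1" by (simp add: algebra_simps power2_eq_square power3_eq_cube)
      hence "u ^ 3 = 1" using u2 by simp
      hence A1: "u ^ (3 * (q - 1)) = 1" by (simp add: power_mult)
      have "u ^ 2 + u = - 1" using u2 by (simp add: eq_neg_iff_add_eq_0)
      hence "w = 1" using wu by simp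
      thus ?thesis using A1 by simp
    qed
  qed
  have C: "x ^ 2 - x + 1 = (x + z) * (x + z ^ 2)"
  proof -
    have "(x + z) * (x + z ^ 2) = x ^ 2 + (z ^ 2 + z) * x + z ^ 3" by (simp add: algebra_simps power2_eq_square power3_eq_cube)
    also have "\<dots> = x ^ 2 - x + 1" using zf(3) z3 by (simp add: eq_neg_iff_add_eq_0[symmetric])
    finally show ?thesis by simp
  qed
  have R: "(x ^ 2 - x + 1 = 0 \<or> (\<exists>j. has_P_order z x j \<and> (j + 1) dvd m)) \<longleftrightarrow> (x ^ 2 - x + 1 = 0 \<or> x ^ q = x)"
  proof (cases "x ^ 2 - x + 1 = 0")
    case True thus ?thesis by simp
  next
    case False
    hence xn: "x \<notin> {0, 1, -z, -(z^2)}" using C x0 x1 by auto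
    have d1: "x + z \<noteq> 0" and d2: "x + z ^ 2 \<noteq> 0" using xn by (auto simp: add_eq_0_iff)
    have A: "(\<exists>j. has_P_order z x j \<and> (j + 1) dvd m) \<longleftrightarrow> (mob z x) ^ (q + 1) = 1"
    proof
      assume "\<exists>j. has_P_order z x j \<and> (j + 1) dvd m"
      then obtain j where j: "has_P_order z x j" "(j + 1) dvd m" by blast
      have "j > 0" using j(1) unfolding has_P_order_def by simp
      hence "ordp ((mob z x) ^ 3) (j + 1)" using has_P_iff[OF z3 z1 three, of j x] j(1) by simp
      hence "((mob z x) ^ 3) ^ m = 1" using ordp_pow j(2) by blast
      thus "(mob z x) ^ (q + 1) = 1" unfolding m3[symmetric] by (simp add: power_mult)
    next
      assume h: "(mob z x) ^ (q + 1) = 1"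
      have "((mob z x) ^ 3) ^ m = 1" using h unfolding m3[symmetric] by (simp add: power_mult)
      moreover have "m > 0" using m3 by simp
      ultimately obtain d where d: "ordp ((mob z x) ^ 3) d" "d dvd m" using ordp_exists by blast
      have s1: "(mob z x) ^ 3 \<noteq> 1" using mob_props[OF z3 z1 xn] by simp
      have "d \<noteq> 1" using d(1) s1 unfolding ordp_def by auto
      moreover have "d > 0" using d(1) unfolding ordp_def by simp
      ultimately have dj: "d - 1 > 0" "d - 1 + 1 = d" by auto
      have "has_P_order z x (d - 1)" using has_P_iff[OF z3 z1 three dj(1), of x] xn d(1) dj(2) by simp
      thus "\<exists>j. has_P_order z x j \<and> (j + 1) dvd m" using dj(2) d(2) by metis
    qed
    have mq: "(mob z x) ^ q = (x ^ q + z ^ 2) / (x ^ q + z)"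
      unfolding mob_def power_divide F(1) zq z2q ..
    have d3: "x ^ q + z \<noteq> 0" using F(1)[of x "z^2"] z2q d2 by (metis power_not_zero)
    have "(mob z x) ^ (q + 1) = ((x ^ q + z ^ 2) * (x + z)) / ((x ^ q + z) * (x + z ^ 2))"
      unfolding power_add mq by (simp add: mob_def)
    hence "(mob z x) ^ (q + 1) = 1 \<longleftrightarrow> (x ^ q + z ^ 2) * (x + z) = (x ^ q + z) * (x + z ^ 2)"
      using d2 d3 by simp
    also have "\<dots> \<longleftrightarrow> (x ^ q - x) * (z - z ^ 2) = 0"
    proof -
      have "(x ^ q - x) * (z - z ^ 2) = (x ^ q + z ^ 2) * (x + z) - (x ^ q + z) * (x + z ^ 2)"
        by (simp add: algebra_simps power2_eq_square)
      thus ?thesis by simp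
    qed
    also have "\<dots> \<longleftrightarrow> x ^ q = x" using zf(1) by simp
    finally show ?thesis using A False by simp
  qed
  show ?thesis using L E R unfolding x_def by simp
qed


theorem lemma3p8:
  fixes z :: "'a::alg_closed_field" and p q k m i :: nat
  assumes "prime p" and "CHAR('a) = p"
    and "\<forall>x::'a. \<exists>n>0. x ^ (p ^ n) = x"
    and "k > 0" and "q = p ^ k" and "q mod 3 = 2" and "m = (q + 1) div 3"
    and "z ^ 3 = 1" and "z \<noteq> 1"
    and "i > 0"
  shows "card {(a, b). curve_pt_notO q m a b \<and> has_P_order z (alpha_pt m a) i}
           = (if coprime (i + 1) p then (q + 1) ^ 2 * totient (i + 1) else 0)
         \<and> (\<forall>a b. curve_pt_notO q m a b \<longrightarrow>
           ((a ^ (q ^ 2) = a \<and> b ^ (q ^ 2) = b) \<longleftrightarrow>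
            ((alpha_pt m a) ^ 2 - alpha_pt m a + 1 = 0 \<or>
             (\<exists>j. has_P_order z (alpha_pt m a) j \<and> (j + 1) dvd m))))"
proof -
  note pp = assms(1) and ch = assms(2) and alg = assms(3) and k0 = assms(4) and qd = assms(5)
    and q3 = assms(6) and md = assms(7) and z3 = assms(8) and z1 = assms(9) and i0 = assms(10)
  have p3: "p \<noteq> 3"
  proof
    assume "p = 3"
    hence "3 dvd q" using qd k0 by (simp add: dvd_power)
    thus False using q3 by simp
  qed
  have three: "(3::'a) \<noteq> 0"
  proof
    assume "(3::'a) = 0"
    hence "of_nat 3 = (0::'a)" by simp
    hence "p dvd 3" using ch of_nat_eq_0_iff_char_dvd by metis
    moreover have "prime (3::nat)" by (simp add: prime_nat_iff' eval_nat_numeral dvd_def) presburger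
    ultimately have "p = 3" using pp by (metis primes_dvd_imp_eq)
    thus False using p3 by simp
  qed
  have m3: "3 * m = q + 1" using q3 md by presburger
  have m0: "m > 0" using m3 by simp
  have pq: "p dvd q" using qd k0 by (simp add: dvd_power)
  have Nq: "of_nat (q + 1) \<noteq> (0::'a)"
  proof
    assume "of_nat (q + 1) = (0::'a)"
    hence "p dvd q + 1" using ch of_nat_eq_0_iff_char_dvd by metis
    hence "p dvd 1" using pq by (metis dvd_add_right_iff)
    thus False using pp by simp
  qed
  have Nm: "of_nat m \<noteq> (0::'a)"
  proof
    assume "of_nat m = (0::'a)"
    hence "of_nat (3 * m) = (0::'a)" by simp
    thus False using Nq m3 by simp
  qed
  define n where "n = i + 1"
  have n2: "n \<ge> 2" using i0 n_def by simp
  define Sn where "Sn = {s::'a. ordp s n}"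
  have cSn: "card Sn = (if coprime (i + 1) p then totient (i + 1) else 0) \<and> finite Sn"
  proof (cases "coprime (i + 1) p")
    case True
    hence "\<not> p dvd n" using pp n_def
      by (metis coprime_common_divisor dvd_refl not_prime_unit)
    hence "of_nat n \<noteq> (0::'a)" using ch of_nat_eq_0_iff_char_dvd by metis
    hence c: "card Sn = totient n" unfolding Sn_def by (intro card_ordp) (use n2 in auto)
    moreover have "totient n > 0" using n2 by simp
    ultimately show ?thesis using True n_def card_ge_0_finite by force
  next
    case False
    hence "p dvd n" using pp n_def by (metis coprime_commute prime_imp_coprime)
    hence "Sn = {}" unfolding Sn_def using ordp_not_dvd[OF pp alg] by blast
    thus ?thesis using False by simp
  qed
  define T where "T = {t::'a. True \<and> t ^ 3 \<in> Sn}"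
  have cT: "card T = 3 * card Sn" unfolding T_def
  proof (rule card_fibers)
    show "finite Sn" using cSn by simp
  next
    fix y assume "y \<in> Sn"
    hence "y \<noteq> 0" unfolding Sn_def ordp_def using n2 by (auto simp: power_0_left)
    thus "card {x::'a. True \<and> x ^ 3 = y} = 3"
      using card_nth_roots[of y 3] three by simp
  qed simp
  have finT: "finite T"
  proof (cases "Sn = {}")
    case True thus ?thesis unfolding T_def by simp
  next
    case False
    hence "card Sn > 0" using cSn card_gt_0_iff by blast
    hence "card T > 0" using cT by simp
    thus ?thesis using card_ge_0_finite by blast
  qed
  define A where "A = {x::'a. has_P_order z x i}"
  have A_eq: "A = {x. x \<notin> {0, 1, -z, -(z^2)} \<and> ordp ((mob z x) ^ 3) n}"
    unfolding A_def n_def using has_P_iff[OF z3 z1 three i0] by blast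
  have inj: "inj_on (mob z) A"
    by (rule inj_onI) (use mob_inj[OF z3 z1] A_eq in auto)
  have img: "mob z ` A = T"
  proof (rule subset_antisym; rule subsetI)
    fix t assume "t \<in> mob z ` A"
    thus "t \<in> T" unfolding A_eq T_def Sn_def by auto
  next
    fix t assume "t \<in> T"
    hence o: "ordp (t ^ 3) n" unfolding T_def Sn_def by simp
    hence "t ^ 3 \<noteq> 1" using n2 unfolding ordp_def by (metis One_nat_def power_one_right less_le_trans one_less_numeral_iff semiring_norm(76) zero_less_one)
    moreover have "t \<noteq> 0" using o n2 unfolding ordp_def by (auto simp: power_0_left)
    ultimately have "(z - t * z ^ 2) / (t - 1) \<notin> {0, 1, -z, -(z^2)}" "mob z ((z - t * z ^ 2) / (t - 1)) = t"
      using mob_inv[OF z3 z1] by blast+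
    thus "t \<in> mob z ` A" unfolding A_eq using o by (metis (mono_tags, lifting) image_eqI mem_Collect_eq)
  qed
  have cA: "card A = card T" using card_image[OF inj] img by simp
  have finA: "finite A" using finT img inj by (metis finite_imageD)
  have S_eq: "{(a, b). curve_pt_notO q m a b \<and> has_P_order z (alpha_pt m a) i}
      = {ab. (\<lambda>(a, b). curve_pt_notO q m a b) ab \<and> (\<lambda>(a, b). alpha_pt m a) ab \<in> A}"
    unfolding A_def by auto
  have cS: "card {ab. (\<lambda>(a, b). curve_pt_notO q m a b) ab \<and> (\<lambda>(a, b). alpha_pt m a) ab \<in> A}
      = (m * (q + 1)) * card A"
  proof (rule card_fibers[OF finA])
    fix y assume "y \<in> A"
    hence y: "y \<noteq> 0" "y \<noteq> 1" unfolding A_eq by auto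
    have "{ab. (\<lambda>(a, b). curve_pt_notO q m a b) ab \<and> (\<lambda>(a, b). alpha_pt m a) ab = y}
        = {(a, b). curve_pt_notO q m a b \<and> alpha_pt m a = y}" by auto
    thus "card {ab. (\<lambda>(a, b). curve_pt_notO q m a b) ab \<and> (\<lambda>(a, b). alpha_pt m a) ab = y} = m * (q + 1)"
      using curve_fiber[OF y m0 Nm Nq] by simp
  qed (use m0 in simp)
  have "card {(a, b). curve_pt_notO q m a b \<and> has_P_order z (alpha_pt m a) i} = (q + 1) ^ 2 * card Sn"
  proof -
    have "card {(a, b). curve_pt_notO q m a b \<and> has_P_order z (alpha_pt m a) i} = m * (q + 1) * (3 * card Sn)"
      unfolding S_eq cS cA cT ..
    also have "\<dots> = (3 * m) * (q + 1) * card Sn" by (simp only: mult_ac)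
    also have "\<dots> = (q + 1) ^ 2 * card Sn" unfolding m3 by (simp add: power2_eq_square)
    finally show ?thesis .
  qed
  hence part1: "card {(a, b). curve_pt_notO q m a b \<and> has_P_order z (alpha_pt m a) i}
           = (if coprime (i + 1) p then (q + 1) ^ 2 * totient (i + 1) else 0)"
    using cSn by simp
  show ?thesis
    using part1 part2[OF pp ch qd q3 m3 z3 z1 three] by blast
qed

end
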